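(* The function $g\mapsto \|g\|_2^2$ from $\mathbb{F}_\infty$ to $\mathbb{N}$ is a morphism on an arbitrary large subset of $\mathbb{F}_\infty$: for every $N, M\in\mathbb{N}$ and every $s_1,\dots,s_M\in\mathbb{N}$ there exist elements $g_{n,k}\in\mathbb{F}_\infty$ ($1\le n\le N$, $1\le k\le M$) such that $\|g_{n,j}^{-1}g_{m,k}\|_2^2 = s_j+s_k$ for all $j,k$ and all $n\ne m$.
   Context: $\mathbb{N}=\{0,1,2,\dots\}$. $\mathbb{F}_\infty$ is the free group on countably infinitely many free generators. Every $g\ne e$ in $\mathbb{F}_\infty$ has a unique reduced form $g = a_1^{k_1}a_2^{k_2}\cdots a_n^{k_n}$ with $a_j$ free generators, $a_j\neq a_{j+1}$, and $k_j\in\mathbb{Z}\setminus\{0\}$; for $0<p\le 2$ the $\ell^p$ length is $\|g\|_p = (\sum_{j=1}^n |k_j|^p)^{1/p}$, and $\|e\|_p=0$. *)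

theory Defs
  imports Main
begin

text \<open>Elements of the free group on countably many free generators (indexed by nat),
  represented by their unique reduced form a_1^k_1 ... a_n^k_n as a list of syllables
  (generator, exponent) with nonzero exponents and distinct adjacent generators.\<close>

type_synonym fword = "(nat \<times> int) list"

definition reduced :: "fword \<Rightarrow> bool" where
  "reduced w \<longleftrightarrow> (\<forall>i<length w. snd (w ! i) \<noteq> 0)
                 \<and> (\<forall>i. Suc i < length w \<longrightarrow> fst (w ! i) \<noteq> fst (w ! Suc i))"

definition F_inf :: "fword set" where
  "F_inf = {w. reduced w}"

fun cons_syl :: "nat \<times> int \<Rightarrow> fword \<Rightarrow> fword" where
  "cons_syl (a, k) [] = (if k = 0 then [] else [(a, k)])"
| "cons_syl (a, k) ((b, l) # ws) =
     (if k = 0 then (b, l) # ws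
      else if a = b then (if k + l = 0 then ws else (a, k + l) # ws)
      else (a, k) # (b, l) # ws)"

definition fmult :: "fword \<Rightarrow> fword \<Rightarrow> fword" where
  "fmult xs ys = foldr cons_syl xs ys"

definition finv :: "fword \<Rightarrow> fword" where
  "finv xs = rev (map (\<lambda>(a, k). (a, - k)) xs)"

definition norm2_sq :: "fword \<Rightarrow> nat" where
  "norm2_sq w = (\<Sum>(a, k)\<leftarrow>w. nat (k ^ 2))"

end

theory Submission
  imports Defs
begin

definition good :: "fword \<Rightarrow> bool" where
  "good w \<longleftrightarrow> (\<forall>x\<in>set w. snd x \<noteq> 0) \<and> successively (\<lambda>x y. fst x \<noteq> fst y) w"

lemma good_reduced: "good w \<Longrightarrow> reduced w"
  unfolding good_def reduced_def successively_conv_nth by auto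

lemma good_fmult: "good (xs @ ys) \<Longrightarrow> fmult xs ys = xs @ ys"
proof (induction xs)
  case Nil
  then show ?case by (simp add: fmult_def)
next
  case (Cons x xs)
  have g: "good (xs @ ys)" using Cons.prems
    by (auto simp: good_def successively_Cons)
  have IH: "foldr cons_syl xs ys = xs @ ys" using Cons.IH[OF g] by (simp add: fmult_def)
  obtain a k where x: "x = (a, k)" by (cases x)
  have k: "k \<noteq> 0" using Cons.prems x by (auto simp: good_def)
  show ?case
  proof (cases "xs @ ys")
    case Nil
    then show ?thesis using IH k x by (simp add: fmult_def)
  next
    case (Cons y zs)
    obtain b l where y: "y = (b, l)" by (cases y)
    have "a \<noteq> b" using Cons.prems \<open>xs @ ys = y # zs\<close> x y
      by (auto simp: good_def)
    then show ?thesis using IH k x y Cons by (simp add: fmult_def)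
  qed
qed

definition w :: "nat \<Rightarrow> nat \<Rightarrow> fword" where
  "w n L = map (\<lambda>i. (2*n + i mod 2, 1)) [0..<L]"

lemma norm_w: "norm2_sq (w n L) = L"
  unfolding norm2_sq_def w_def by (induction L) auto

lemma finv_w: "finv (w n L) = map (\<lambda>i. (2*n + i mod 2, -1)) (rev [0..<L])"
  unfolding finv_def w_def by (simp add: rev_map)

lemma succ_upt: "successively (\<lambda>i j. i mod 2 \<noteq> (j::nat) mod 2) [0..<L]"
  unfolding successively_conv_nth by (auto simp: nth_upt) presburger

lemma good_concat:
  assumes "n \<noteq> m"
  shows "good (finv (w n A) @ w m B)"
proof -
  have s1: "successively (\<lambda>x y. fst x \<noteq> fst y) (finv (w n A))"
    unfolding finv_w successively_map successively_rev
    by (rule successively_mono[OF succ_upt]) auto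
  have s2: "successively (\<lambda>x y. fst x \<noteq> fst y) (w m B)"
    unfolding w_def successively_map
    by (rule successively_mono[OF succ_upt]) auto
  have gen1: "\<forall>x\<in>set (finv (w n A)). fst x = 2*n \<or> fst x = 2*n+1"
    unfolding finv_w by auto
  have gen2: "\<forall>x\<in>set (w m B). fst x = 2*m \<or> fst x = 2*m+1"
    unfolding w_def by auto
  have lh: "finv (w n A) = [] \<or> w m B = [] \<or> fst (last (finv (w n A))) \<noteq> fst (hd (w m B))"
  proof (cases "finv (w n A) = [] \<or> w m B = []")
    case False
    then have "last (finv (w n A)) \<in> set (finv (w n A))" "hd (w m B) \<in> set (w m B)" by auto
    then show ?thesis using gen1 gen2 assms by fastforce
  qed auto
  have nz: "\<forall>x\<in>set (finv (w n A) @ w m B). snd x \<noteq> 0"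
    unfolding finv_w by (auto simp: w_def)
  show ?thesis unfolding good_def using s1 s2 lh nz by (simp add: successively_append_iff)
qed

theorem proposition4p1:
  fixes N M :: nat and s :: "nat \<Rightarrow> nat"
  shows "\<exists>g :: nat \<Rightarrow> nat \<Rightarrow> fword.
           (\<forall>n\<in>{1..N}. \<forall>k\<in>{1..M}. g n k \<in> F_inf) \<and>
           (\<forall>n\<in>{1..N}. \<forall>m\<in>{1..N}. \<forall>j\<in>{1..M}. \<forall>k\<in>{1..M}.
              n \<noteq> m \<longrightarrow> norm2_sq (fmult (finv (g n j)) (g m k)) = s j + s k)"
proof (intro exI[of _ "\<lambda>n k. w n (s k)"] conjI ballI impI)
  fix n k
  have "good (finv (w (n+1) 0) @ w n (s k))" by (rule good_concat) simp
  then have "good (w n (s k))" by (simp add: finv_def w_def)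
  then show "w n (s k) \<in> F_inf" by (simp add: F_inf_def good_reduced)
next
  fix n m j k :: nat
  assume "n \<noteq> m"
  then have "fmult (finv (w n (s j))) (w m (s k)) = finv (w n (s j)) @ w m (s k)"
    using good_fmult good_concat by blast
  moreover have "norm2_sq (finv (w n L)) = L" for L
    unfolding finv_w norm2_sq_def by (induction L) auto
  ultimately show "norm2_sq (fmult (finv (w n (s j))) (w m (s k))) = s j + s k"
    by (simp add: norm2_sq_def norm_w[unfolded norm2_sq_def])
qed

end
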